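(* Let $f:\mathbb{R}^n\to(-\infty,+\infty]$ be proper, lower semicontinuous and prox-bounded with threshold $\lambda_f>0$, and let $0<\lambda<\lambda_f$. Then the following are equivalent: (a) $P_\lambda f$ is single-valued everywhere; (b) for every $x\in\mathbb{R}^n$ there exists $u\in P_\lambda f(x)$ such that $\lambda f+j$ is essentially strongly convex at $u$ for $x$; (c) $\lambda f+j$ is essentially strictly convex. When one of these holds, $P_\lambda f=\nabla(\lambda f+j)^*$.
   Context: $j:=\frac12\|\cdot\|^2$; $^*$ denotes the Fenchel conjugate. $P_\lambda f(x):=\operatorname{argmin}_y\{f(y)+\frac1{2\lambda}\|y-x\|^2\}$; prox-bounded with threshold $\lambda_f=\sup\{\lambda>0:\inf_y\{f(y)+\frac1{2\lambda}\|y-x\|^2\}>-\infty\text{ for some }x\}$. $\Gamma_0$: proper lsc convex $\psi:[0,\infty)\to[0,\infty]$ with $\psi(t)=0$ iff $t=0$. $g$ is essentially strongly convex at $u\in\operatorname{dom}g$ for $x$ if for some $\psi\in\Gamma_0$, $g(y)\ge g(u)+\langle y-u,x\rangle+\psi(\|y-u\|)$ for all $y$. Essential strict convexity is in the sense of Rockafellar (a proper convex function strictly convex on every convex subset of $\operatorname{dom}\partial g$; for proper lsc convex $g$ on $\mathbb{R}^n$ this is equivalent to $g^*$ being essentially smooth). *)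

theory Defs
  imports "HOL-Analysis.Analysis" "HOL-Library.Liminf_Limsup"
begin

definition proper_fun :: "('a \<Rightarrow> ereal) \<Rightarrow> bool" where
  "proper_fun f \<longleftrightarrow> (\<forall>x. f x \<noteq> -\<infinity>) \<and> (\<exists>x. f x \<noteq> \<infinity>)"

definition lsc_fun :: "('a::topological_space \<Rightarrow> ereal) \<Rightarrow> bool" where
  "lsc_fun f \<longleftrightarrow> (\<forall>x. f x \<le> Liminf (at x) f)"

definition jfun :: "'a::real_normed_vector \<Rightarrow> real" where
  "jfun x = (norm x)\<^sup>2 / 2"

definition fconj :: "('a::real_inner \<Rightarrow> ereal) \<Rightarrow> 'a \<Rightarrow> ereal" where
  "fconj g x = (SUP y. ereal (inner x y) - g y)"

definition moreau_env :: "real \<Rightarrow> ('a::real_normed_vector \<Rightarrow> ereal) \<Rightarrow> 'a \<Rightarrow> ereal" where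
  "moreau_env lam f x = (INF y. f y + ereal ((norm (y - x))\<^sup>2 / (2 * lam)))"

definition prox :: "real \<Rightarrow> ('a::real_normed_vector \<Rightarrow> ereal) \<Rightarrow> 'a \<Rightarrow> 'a set" where
  "prox lam f x = {u. \<forall>y. f u + ereal ((norm (u - x))\<^sup>2 / (2 * lam))
                          \<le> f y + ereal ((norm (y - x))\<^sup>2 / (2 * lam))}"

definition prox_bounded :: "('a::real_normed_vector \<Rightarrow> ereal) \<Rightarrow> bool" where
  "prox_bounded f \<longleftrightarrow> (\<exists>lam>0. \<exists>x. moreau_env lam f x > -\<infinity>)"

definition prox_threshold :: "('a::real_normed_vector \<Rightarrow> ereal) \<Rightarrow> ereal" where
  "prox_threshold f = Sup {ereal lam | lam. lam > 0 \<and> (\<exists>x. moreau_env lam f x > -\<infinity>)}"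

text \<open>Convexity of an extended-real-valued function (which never takes -infinity);
  note ereal s * \<infinity> = \<infinity> for s > 0.\<close>
definition convex_efun :: "('a::real_vector \<Rightarrow> ereal) \<Rightarrow> bool" where
  "convex_efun g \<longleftrightarrow> (\<forall>x y s. 0 < s \<and> s < 1 \<longrightarrow>
      g (s *\<^sub>R x + (1 - s) *\<^sub>R y) \<le> ereal s * g x + ereal (1 - s) * g y)"

definition strictly_convex_on_efun :: "'a set \<Rightarrow> ('a::real_vector \<Rightarrow> ereal) \<Rightarrow> bool" where
  "strictly_convex_on_efun C g \<longleftrightarrow> (\<forall>x\<in>C. \<forall>y\<in>C. \<forall>s. x \<noteq> y \<and> 0 < s \<and> s < 1 \<longrightarrow>
      g (s *\<^sub>R x + (1 - s) *\<^sub>R y) < ereal s * g x + ereal (1 - s) * g y)"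

definition subdiff :: "('a::real_inner \<Rightarrow> ereal) \<Rightarrow> 'a \<Rightarrow> 'a set" where
  "subdiff g x = {v. \<bar>g x\<bar> \<noteq> \<infinity> \<and> (\<forall>y. g y \<ge> g x + ereal (inner v (y - x)))}"

definition ess_strictly_convex :: "('a::real_inner \<Rightarrow> ereal) \<Rightarrow> bool" where
  "ess_strictly_convex g \<longleftrightarrow> proper_fun g \<and> convex_efun g \<and>
     (\<forall>C. convex C \<and> C \<subseteq> {x. subdiff g x \<noteq> {}} \<longrightarrow> strictly_convex_on_efun C g)"

definition Gamma0 :: "(real \<Rightarrow> ereal) set" where
  "Gamma0 = {psi. (\<forall>t\<ge>0. psi t \<ge> 0) \<and> psi 0 = 0 \<and> (\<forall>t>0. psi t \<noteq> 0)
      \<and> (\<forall>t\<ge>0. psi t \<le> Liminf (at t within {0..}) psi)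
      \<and> (\<forall>a\<ge>0. \<forall>b\<ge>0. \<forall>s. 0 < s \<and> s < 1 \<longrightarrow>
            psi (s * a + (1 - s) * b) \<le> ereal s * psi a + ereal (1 - s) * psi b)}"

definition ess_strongly_convex_at :: "('a::real_inner \<Rightarrow> ereal) \<Rightarrow> 'a \<Rightarrow> 'a \<Rightarrow> bool" where
  "ess_strongly_convex_at g u x \<longleftrightarrow> \<bar>g u\<bar> \<noteq> \<infinity> \<and>
     (\<exists>psi\<in>Gamma0. \<forall>y. g y \<ge> g u + ereal (inner (y - u) x) + psi (norm (y - u)))"

end

theory Submission
  imports Defs
begin


lemma ereal_le_of_all_above:
  fixes a m :: ereal
  assumes "\<And>t. m < ereal t \<Longrightarrow> a \<le> ereal t"
  shows "a \<le> m"
proof (rule ccontr)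
  assume "\<not> a \<le> m"
  then have "m < a" by simp
  then obtain t where "m < ereal t" "ereal t < a" using ereal_dense2 by blast
  with assms show False by force
qed

lemma lsc_add_cont:
  fixes F :: "'a::topological_space \<Rightarrow> ereal"
  assumes lsc: "\<And>t. open {y. ereal t < F y}" and q: "continuous_on UNIV q"
    and ni: "\<And>y. F y \<noteq> -\<infinity>"
  shows "open {y. ereal t < F y + ereal (q y)}"
proof -
  have eq: "{y. ereal t < F y + ereal (q y)} = (\<Union>a. {y. ereal a < F y} \<inter> {y. t - a < q y})"
  proof (intro set_eqI iffI)
    fix y assume "y \<in> {y. ereal t < F y + ereal (q y)}"
    then have h: "ereal t < F y + ereal (q y)" by simp
    show "y \<in> (\<Union>a. {y. ereal a < F y} \<inter> {y. t - a < q y})"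
    proof (cases "F y")
      case (real r)
      with h have "t < r + q y" by simp
      then show ?thesis using real
        by (intro UN_I[of "(t - q y + r)/2"]) (auto simp: field_simps)
    next
      case PInf
      then show ?thesis by (intro UN_I[of "t - q y + 1"]) auto
    next
      case MInf with ni show ?thesis by simp
    qed
  next
    fix y assume "y \<in> (\<Union>a. {y. ereal a < F y} \<inter> {y. t - a < q y})"
    then obtain a where a: "ereal a < F y" "t - a < q y" by auto
    show "y \<in> {y. ereal t < F y + ereal (q y)}"
      using a by (cases "F y") auto
  qed
  show ?thesis unfolding eq
    by (intro open_UN ballI open_Int lsc open_Collect_less continuous_intros q)
qed

lemma lsc_scale:
  fixes F :: "'a::topological_space \<Rightarrow> ereal"
  assumes lsc: "\<And>t. open {y. ereal t < F y}" and c: "c > 0"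
  shows "open {y. ereal t < ereal c * F y}"
proof -
  have "{y. ereal t < ereal c * F y} = {y. ereal (t / c) < F y}"
  proof (intro set_eqI)
    fix y show "(y \<in> {y. ereal t < ereal c * F y}) = (y \<in> {y. ereal (t / c) < F y})"
      using c by (cases "F y") (auto simp: field_simps)
  qed
  then show ?thesis using lsc by simp
qed

lemma lsc_attain:
  fixes F :: "'a::topological_space \<Rightarrow> ereal"
  assumes lsc: "\<And>t. open {y. ereal t < F y}" and K: "compact K" "K \<noteq> {}"
  shows "\<exists>y\<in>K. \<forall>z\<in>K. F y \<le> F z"
proof (cases "(INF z\<in>K. F z) = \<infinity>")
  case True
  obtain y where y: "y \<in> K" using K by auto
  have "\<forall>z\<in>K. F z = \<infinity>"
  proof
    fix z assume "z \<in> K"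
    then have "(INF z\<in>K. F z) \<le> F z" by (rule INF_lower)
    then have "\<infinity> \<le> F z" unfolding True .
    then show "F z = \<infinity>" by simp
  qed
  then show ?thesis using y by auto
next
  case False
  let ?m = "INF z\<in>K. F z"
  have cl: "closed {y. F y \<le> ereal t}" for t
  proof -
    have "- {y. F y \<le> ereal t} = {y. ereal t < F y}" by (auto simp: not_le)
    then show ?thesis using lsc[of t] by (metis closed_def)
  qed
  have "K \<inter> \<Inter> ((\<lambda>t. {y. F y \<le> ereal t}) ` {t. ?m < ereal t}) \<noteq> {}"
  proof (rule compact_imp_fip_image[OF K(1)])
    fix i show "closed {y. F y \<le> ereal i}" by (rule cl)
  next
    fix I' assume I': "finite I'" "I' \<subseteq> {t. ?m < ereal t}"
    show "K \<inter> \<Inter> ((\<lambda>t. {y. F y \<le> ereal t}) ` I') \<noteq> {}"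
    proof (cases "I' = {}")
      case True then show ?thesis using K by auto
    next
      case ne: False
      let ?t = "Min I'"
      have "?t \<in> I'" using I' ne by auto
      then have "?m < ereal ?t" using I' by auto
      then obtain y where y: "y \<in> K" "F y < ereal ?t" by (meson INF_less_iff)
      have "\<forall>t\<in>I'. F y \<le> ereal t"
      proof
        fix t assume "t \<in> I'"
        then have "?t \<le> t" using I' by simp
        then have "ereal ?t \<le> ereal t" by simp
        then show "F y \<le> ereal t" using y(2) by (meson less_imp_le order_trans)
      qed
      then show ?thesis using y by auto
    qed
  qed
  then obtain y where y: "y \<in> K" "\<And>t. ?m < ereal t \<Longrightarrow> F y \<le> ereal t" by auto
  have "F y \<le> ?m" by (rule ereal_le_of_all_above) (use y in auto)
  then show ?thesis using y by (meson INF_lower order_trans)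
qed

lemma bound_quad:
  fixes e B K C :: real
  assumes "e > 0"
  shows "\<exists>R\<ge>0. \<forall>r\<ge>R. e * r^2 - B * r - K > C"
proof -
  define R where "R = (\<bar>B\<bar> + \<bar>K\<bar> + \<bar>C\<bar> + 1) / e + 1"
  have R1: "R \<ge> 1" using assms unfolding R_def by simp
  have "e * r^2 - B * r - K > C" if r: "r \<ge> R" for r
  proof -
    have "e * r \<ge> e * R" using r assms by simp
    also have "e * R = \<bar>B\<bar> + \<bar>K\<bar> + \<bar>C\<bar> + 1 + e" using assms unfolding R_def by (simp add: field_simps)
    finally have er: "e * r - \<bar>B\<bar> \<ge> \<bar>K\<bar> + \<bar>C\<bar> + 1" using assms by simp
    have r1: "r \<ge> 1" using r R1 by simp
    have "r * (e * r - \<bar>B\<bar>) \<ge> 1 * (\<bar>K\<bar> + \<bar>C\<bar> + 1)"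
      using r1 er by (intro mult_mono) auto
    moreover have "B * r \<le> \<bar>B\<bar> * r" using r1 by (simp add: mult_right_mono)
    ultimately have "e * r^2 - B * r \<ge> \<bar>K\<bar> + \<bar>C\<bar> + 1"
      by (simp add: power2_eq_square algebra_simps)
    then show ?thesis by linarith
  qed
  then show ?thesis using R1 by (intro exI[of _ R]) auto
qed




locale gfun =
  fixes g :: "'a::euclidean_space \<Rightarrow> ereal"
  assumes ninf: "\<And>y. g y \<noteq> -\<infinity>"
    and fin: "\<exists>y. g y \<noteq> \<infinity>"
    and lsc: "\<And>t. open {y. ereal t < g y}"
    and coer: "\<exists>\<epsilon>>0. \<exists>K. \<forall>y. ereal (\<epsilon> * (norm y)^2 - K) \<le> g y"
begin

definition H :: "'a \<Rightarrow> 'a \<Rightarrow> ereal" where "H x y = g y - ereal (inner x y)"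
definition am :: "'a \<Rightarrow> 'a set" where "am x = {u. \<forall>y. H x u \<le> H x y}"

lemma H_ninf: "H x y \<noteq> -\<infinity>" using ninf[of y] by (cases "g y") (auto simp: H_def)

lemma H_inf: "g y = \<infinity> \<Longrightarrow> H x y = \<infinity>" by (simp add: H_def)

lemma H_real: "g y = ereal r \<Longrightarrow> H x y = ereal (r - inner x y)" by (simp add: H_def)

lemma H_lsc: "open {y. ereal t < H x y}"
proof -
  have "H x y = g y + ereal (- inner x y)" for y
    using ninf[of y] by (cases "g y") (auto simp: H_def)
  moreover have "open {y. ereal t < g y + ereal (- inner x y)}"
    by (rule lsc_add_cont[OF lsc]) (intro continuous_intros, rule ninf)
  ultimately show ?thesis by simp
qed

lemma H_shift: "H z y = H x y + ereal (inner (x - z) y)"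
  using ninf[of y] by (cases "g y") (auto simp: H_def inner_diff_left)

lemma H_coer: "\<exists>\<epsilon>>0. \<exists>K. \<forall>x y. ereal (\<epsilon> * (norm y)^2 - norm x * norm y - K) \<le> H x y"
proof -
  obtain \<epsilon> K where e: "\<epsilon> > 0" and c: "\<And>y. ereal (\<epsilon> * (norm y)^2 - K) \<le> g y" using coer by blast
  have "ereal (\<epsilon> * (norm y)^2 - norm x * norm y - K) \<le> H x y" for x y
  proof (cases "g y")
    case (real r)
    have "inner x y \<le> norm x * norm y" by (rule norm_cauchy_schwarz)
    moreover have "\<epsilon> * (norm y)^2 - K \<le> r" using c[of y] real by simp
    ultimately show ?thesis using real by (simp add: H_def)
  next
    case PInf then show ?thesis by (simp add: H_def)
  next
    case MInf then show ?thesis using ninf by simp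
  qed
  then show ?thesis using e by blast
qed

lemma am_exists: "\<exists>u. u \<in> am x"
proof -
  obtain y0 where y0: "g y0 \<noteq> \<infinity>" using fin by blast
  then obtain c0 where c0: "H x y0 = ereal c0" using ninf[of y0] H_real
    by (cases "g y0") auto
  obtain \<epsilon> K where e: "\<epsilon> > 0" and c: "\<And>x y. ereal (\<epsilon> * (norm y)^2 - norm x * norm y - K) \<le> H x y"
    using H_coer by blast
  obtain R where R: "R \<ge> 0" "\<And>r. r \<ge> R \<Longrightarrow> \<epsilon> * r^2 - norm x * r - K > c0"
    using bound_quad[OF e] by blast
  let ?S = "cball (0::'a) (max R (norm y0))"
  have "?S \<noteq> {}" using R by auto
  then obtain u where u: "u \<in> ?S" "\<And>z. z \<in> ?S \<Longrightarrow> H x u \<le> H x z"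
    using lsc_attain[OF H_lsc compact_cball] by blast
  have y0S: "y0 \<in> ?S" by simp
  have "H x u \<le> H x y" for y
  proof (cases "y \<in> ?S")
    case True then show ?thesis using u by auto
  next
    case False
    then have "norm y \<ge> R" by auto
    then have "ereal c0 < ereal (\<epsilon> * (norm y)^2 - norm x * norm y - K)" using R by simp
    also have "\<dots> \<le> H x y" by (rule c)
    finally have "H x y0 \<le> H x y" using c0 by simp
    then show ?thesis using u(2)[OF y0S] by simp
  qed
  then show ?thesis unfolding am_def by blast
qed

lemma am_fin: assumes "u \<in> am x" shows "g u \<noteq> \<infinity>"
proof
  assume gu: "g u = \<infinity>"
  obtain y0 where y0: "g y0 \<noteq> \<infinity>" using fin by blast
  have "H x u \<le> H x y0" using assms by (auto simp: am_def)
  moreover have "H x y0 \<noteq> \<infinity>" using y0 ninf[of y0] by (cases "g y0") (auto simp: H_def)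
  ultimately show False using gu by (simp add: H_def)
qed

end

locale sv = gfun +
  assumes sv: "\<And>x. \<exists>u. am x = {u}"
begin

definition p :: "'a \<Rightarrow> 'a" where "p x = (THE u. u \<in> am x)"

lemma am_eq: "am x = {p x}"
proof -
  obtain u where u: "am x = {u}" using sv by blast
  then have "p x = u" unfolding p_def by simp
  then show ?thesis using u by simp
qed

lemma p_am: "p x \<in> am x" using am_eq by simp

lemma p_min: "H x (p x) \<le> H x y" using p_am by (auto simp: am_def)

definition G :: "'a \<Rightarrow> real" where "G y = real_of_ereal (g y)"

lemma g_p: "g (p x) = ereal (G (p x))"
  using am_fin[OF p_am] ninf[of "p x"] unfolding G_def by (cases "g (p x)") auto

definition phi :: "'a \<Rightarrow> real" where "phi x = inner x (p x) - G (p x)"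

lemma phi_ge': assumes "g y = ereal r" shows "inner x y - r \<le> phi x"
proof -
  have "H x (p x) \<le> H x y" by (rule p_min)
  then show ?thesis using assms g_p[of x] by (simp add: H_def phi_def)
qed

lemma phi_ge: "ereal (inner x y) - g y \<le> ereal (phi x)"
  using phi_ge'[of y _ x] ninf[of y] by (cases "g y") auto

lemma phi_sub: "phi x + inner (z - x) (p x) \<le> phi z"
  using phi_ge'[OF g_p[of x], of z] by (simp add: phi_def inner_diff_left)

lemma fconj_eq: "fconj g x = ereal (phi x)"
  unfolding fconj_def
proof (rule antisym)
  show "(SUP y. ereal (inner x y) - g y) \<le> ereal (phi x)" by (rule SUP_least) (rule phi_ge)
  have "ereal (phi x) = ereal (inner x (p x)) - g (p x)" by (simp add: g_p phi_def)
  also have "\<dots> \<le> (SUP y. ereal (inner x y) - g y)" by (rule SUP_upper) simp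
  finally show "ereal (phi x) \<le> (SUP y. ereal (inner x y) - g y)" .
qed

end



context sv begin

lemma p_cont:
  assumes e: "e > 0"
  shows "\<exists>d>0. \<forall>z. norm (z - x) < d \<longrightarrow> norm (p z - p x) < e"
proof -
  obtain m where m: "H x (p x) = ereal m" using g_p[of x] H_real by blast
  obtain \<epsilon> K where ep: "\<epsilon> > 0" and c: "\<And>x y. ereal (\<epsilon> * (norm y)^2 - norm x * norm y - K) \<le> H x y"
    using H_coer by blast
  obtain R where R: "R \<ge> 0" "\<And>r. r \<ge> R \<Longrightarrow> \<epsilon> * r^2 - (norm x + 1) * r - K > m + norm (p x)"
    using bound_quad[OF ep] by blast
  have Hzx: "H z (p x) \<le> ereal (m + norm (x - z) * norm (p x))" for z
  proof -
    have "H z (p x) = ereal (m + inner (x - z) (p x))" using H_shift[of z "p x" x] m by simp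
    moreover have "inner (x - z) (p x) \<le> norm (x - z) * norm (p x)" by (rule norm_cauchy_schwarz)
    ultimately show ?thesis by simp
  qed
  have bnd: "norm (p z) < R" if z: "norm (z - x) < 1" for z
  proof (rule ccontr)
    assume "\<not> norm (p z) < R"
    then have nR: "norm (p z) \<ge> R" by simp
    have nz: "norm z \<le> norm x + 1" using z norm_triangle_ineq2[of z x] by simp
    have "norm z * norm (p z) \<le> (norm x + 1) * norm (p z)" using nz by (simp add: mult_right_mono)
    then have "m + norm (p x) < \<epsilon> * (norm (p z))^2 - norm z * norm (p z) - K" using R(2)[OF nR] by simp
    then have "ereal (m + norm (p x)) < ereal (\<epsilon> * (norm (p z))^2 - norm z * norm (p z) - K)" by simp
    also have "\<dots> \<le> H z (p z)" by (rule c)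
    also have "\<dots> \<le> H z (p x)" by (rule p_min)
    also have "\<dots> \<le> ereal (m + norm (x - z) * norm (p x))" by (rule Hzx)
    also have "\<dots> \<le> ereal (m + norm (p x))"
      using z by (simp add: norm_minus_commute mult_left_le_one_le)
    finally show False by simp
  qed
  let ?Kc = "cball 0 R \<inter> {y. e \<le> norm (y - p x)}"
  have cKc: "compact ?Kc"
  proof -
    have "closed {y. e \<le> norm (y - p x)}"
      by (rule closed_Collect_le) (intro continuous_intros)+
    then show ?thesis by (rule compact_Int_closed[OF compact_cball])
  qed
  show ?thesis
  proof (cases "?Kc = {}")
    case True
    have "norm (p z - p x) < e" if "norm (z - x) < 1" for z
    proof -
      have "p z \<in> cball 0 R" using bnd[OF that] by simp
      then show ?thesis using True by (metis IntI mem_Collect_eq empty_iff not_le)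
    qed
    then show ?thesis by (intro exI[of _ 1]) auto
  next
    case False
    then obtain y0 where y0: "y0 \<in> ?Kc" "\<And>y. y \<in> ?Kc \<Longrightarrow> H x y0 \<le> H x y"
      using lsc_attain[OF H_lsc cKc] by blast
    have "y0 \<noteq> p x" using y0(1) e by auto
    then have "y0 \<notin> am x" using am_eq by auto
    have "ereal m < H x y0"
    proof (rule ccontr)
      assume "\<not> ereal m < H x y0"
      then have "H x y0 \<le> H x (p x)" using m by simp
      then have "y0 \<in> am x" using p_min[of x] unfolding am_def by (blast intro: order_trans)
      then show False using \<open>y0 \<notin> am x\<close> by simp
    qed
    then obtain t where t: "ereal m < ereal t" "ereal t < H x y0" using ereal_dense2 by blast
    define \<delta> where "\<delta> = (t - m) / 2"
    have dpos: "\<delta> > 0" using t unfolding \<delta>_def by simp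
    have Kb: "ereal (m + 2 * \<delta>) \<le> H x y" if "y \<in> ?Kc" for y
    proof -
      have "m + 2 * \<delta> = t" unfolding \<delta>_def by (simp add: field_simps)
      then show ?thesis using y0(2)[OF that] t(2) by simp
    qed
    define d where "d = min 1 (\<delta> / (R + norm (p x) + 1))"
    have "R + norm (p x) + 1 > 0" using R(1) norm_ge_zero[of "p x"] by linarith
    then have dpos': "d > 0" using dpos unfolding d_def by simp
    have "norm (p z - p x) < e" if z: "norm (z - x) < d" for z
    proof (rule ccontr)
      assume "\<not> norm (p z - p x) < e"
      moreover have "norm (z - x) < 1" using z unfolding d_def by simp
      then have pzR: "norm (p z) < R" using bnd by blast
      ultimately have inK: "p z \<in> ?Kc" by auto
      have pos: "R + norm (p x) + 1 > 0" using R(1) norm_ge_zero[of "p x"] by linarith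
      have "d \<le> \<delta> / (R + norm (p x) + 1)" unfolding d_def by simp
      then have dd: "d * (R + norm (p x) + 1) \<le> \<delta>" using pos by (simp add: le_divide_eq)
      have "norm (z - x) * (R + norm (p x) + 1) < d * (R + norm (p x) + 1)"
        using z pos by simp
      moreover have "norm (z - x) * (R + norm (p x)) \<le> norm (z - x) * (R + norm (p x) + 1)"
        by (intro mult_left_mono) auto
      ultimately have small: "norm (z - x) * (R + norm (p x)) < \<delta>" using dd by linarith
      have i1: "- (norm (x - z) * R) \<le> inner (x - z) (p z)"
      proof -
        have "\<bar>inner (x - z) (p z)\<bar> \<le> norm (x - z) * norm (p z)" by (rule Cauchy_Schwarz_ineq2)
        also have "\<dots> \<le> norm (x - z) * R" using pzR
          by (intro mult_left_mono) auto
        finally show ?thesis by linarith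
      qed
      have "ereal (m + 2 * \<delta> + inner (x - z) (p z)) \<le> H x (p z) + ereal (inner (x - z) (p z))"
        using Kb[OF inK] by (metis add_right_mono plus_ereal.simps(1))
      also have "\<dots> = H z (p z)" by (rule H_shift[symmetric])
      also have "\<dots> \<le> H z (p x)" by (rule p_min)
      also have "\<dots> \<le> ereal (m + norm (x - z) * norm (p x))" by (rule Hzx)
      finally have "m + 2 * \<delta> + inner (x - z) (p z) \<le> m + norm (x - z) * norm (p x)" by simp
      moreover have "norm (x - z) * R = norm (z - x) * R" "norm (x - z) * norm (p x) = norm (z - x) * norm (p x)"
        by (simp_all add: norm_minus_commute)
      moreover have "norm (z - x) * (R + norm (p x)) = norm (z - x) * R + norm (z - x) * norm (p x)"
        by (simp add: distrib_left)
      ultimately show False using i1 small dpos by linarith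
    qed
    then show ?thesis using dpos' by blast
  qed
qed

lemma phi_deriv: "(phi has_derivative (\<lambda>h. inner (p x) h)) (at x)"
  unfolding has_derivative_within_alt
proof (intro conjI allI impI)
  show "bounded_linear (inner (p x))" by (rule bounded_linear_inner_right)
  fix e :: real assume e: "e > 0"
  obtain d where d: "d > 0" "\<And>z. norm (z - x) < d \<Longrightarrow> norm (p z - p x) < e"
    using p_cont[OF e] by blast
  have "norm (phi y - phi x - inner (p x) (y - x)) \<le> e * norm (y - x)"
    if y: "norm (y - x) < d" for y
  proof -
    have c1: "inner (p x) (y - x) = inner (y - x) (p x)" by (rule inner_commute)
    have lo: "0 \<le> phi y - phi x - inner (p x) (y - x)"
      using phi_sub[of x y] c1 by linarith
    have c2: "inner (x - y) (p y) = - inner (y - x) (p y)"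
      by (metis inner_minus_left minus_diff_eq)
    have c3: "inner (y - x) (p y - p x) = inner (y - x) (p y) - inner (y - x) (p x)"
      by (rule inner_diff_right)
    have "phi y + inner (x - y) (p y) \<le> phi x" by (rule phi_sub)
    then have "phi y - phi x - inner (p x) (y - x) \<le> inner (y - x) (p y - p x)"
      using c1 c2 c3 by linarith
    also have "\<dots> \<le> norm (y - x) * norm (p y - p x)" by (rule norm_cauchy_schwarz)
    also have "\<dots> \<le> norm (y - x) * e" using d(2)[OF y] by (intro mult_left_mono) auto
    finally show ?thesis using lo by (simp add: mult.commute)
  qed
  then show "\<exists>d>0. \<forall>y\<in>UNIV. norm (y - x) < d \<longrightarrow>
      norm (phi y - phi x - inner (p x) (y - x)) \<le> e * norm (y - x)" using d(1) by blast
qed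

lemma phi_cont: "continuous_on UNIV phi"
  using phi_deriv has_derivative_continuous continuous_at_imp_continuous_on by blast

end



context sv begin

lemma core:
  assumes M: "\<And>x. inner x z - phi x \<le> M"
  shows "g z \<le> ereal M"
proof -
  have cl: "closed {w. g w \<le> ereal M}"
  proof -
    have "- {w. g w \<le> ereal M} = {w. ereal M < g w}" by (auto simp: not_le)
    then show ?thesis using lsc[of M] by (metis closed_def)
  qed
  have "\<forall>e>0. \<exists>w\<in>{w. g w \<le> ereal M}. dist w z < e"
  proof (intro allI impI)
    fix e :: real assume e: "e > 0"
    define C where "C = \<bar>phi 0 + M\<bar> + 1"
    have Cpos: "C > 0" unfolding C_def by simp
    define t where "t = e^2 / (2 * C)"
    have tpos: "t > 0" unfolding t_def using e Cpos by simp
    define \<psi> where "\<psi> x = phi x - inner x z + t / 2 * inner x x" for x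
    have psi_lb: "-M + t / 2 * (norm x)^2 \<le> \<psi> x" for x
      using M[of x] unfolding \<psi>_def by (simp add: power2_norm_eq_inner)
    obtain R where R: "R \<ge> 0" "\<And>r. r \<ge> R \<Longrightarrow> t / 2 * r^2 - 0 * r - M > phi 0"
      using bound_quad[of "t/2"] tpos by (metis half_gt_zero)
    have cont: "continuous_on (cball 0 R) \<psi>" unfolding \<psi>_def
      by (intro continuous_intros continuous_on_subset[OF phi_cont]) auto
    obtain xt where xt: "xt \<in> cball 0 R" "\<And>y. y \<in> cball 0 R \<Longrightarrow> \<psi> xt \<le> \<psi> y"
      using continuous_attains_inf[OF compact_cball _ cont] R(1) by auto
    have psi0: "\<psi> 0 = phi 0" unfolding \<psi>_def by simp
    have glob: "\<psi> xt \<le> \<psi> y" for y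
    proof (cases "y \<in> cball 0 R")
      case True then show ?thesis using xt by auto
    next
      case False
      then have "norm y \<ge> R" by simp
      then have "phi 0 < t / 2 * (norm y)^2 - M" using R(2) by fastforce
      then have "\<psi> 0 < \<psi> y" using psi_lb[of y] psi0 by linarith
      moreover have "\<psi> xt \<le> \<psi> 0" using xt R(1) by simp
      ultimately show ?thesis by simp
    qed
    have der: "(\<psi> has_derivative (\<lambda>h. inner (p xt) h - inner h z + t / 2 * (inner xt h + inner h xt))) (at xt)"
      unfolding \<psi>_def
      by (intro has_derivative_diff has_derivative_add phi_deriv has_derivative_mult_right
          has_derivative_inner_left has_derivative_inner has_derivative_ident)
    have "(\<lambda>h. inner (p xt) h - inner h z + t / 2 * (inner xt h + inner h xt)) = (\<lambda>v. 0)"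
      using differential_zero_maxmin[OF _ open_UNIV der] glob by auto
    then have D0: "inner (p xt) h - inner h z + t / 2 * (inner xt h + inner h xt) = 0" for h
      by (metis (mono_tags, lifting))
    have "inner (p xt - z + t *\<^sub>R xt) h = inner (p xt) h - inner h z + t / 2 * (inner xt h + inner h xt)" for h
      by (simp add: inner_add_left inner_diff_left inner_commute[of h] algebra_simps)
    then have "inner (p xt - z + t *\<^sub>R xt) h = 0" for h using D0 by simp
    then have "inner (p xt - z + t *\<^sub>R xt) (p xt - z + t *\<^sub>R xt) = 0" by blast
    then have v0: "p xt - z + t *\<^sub>R xt = 0" by simp
    have "p xt = (p xt - z + t *\<^sub>R xt) + (z - t *\<^sub>R xt)" by (simp add: algebra_simps)
    then have pz: "p xt = z - t *\<^sub>R xt" using v0 by simp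
    let ?w = "p xt"
    have phix: "phi xt = inner xt ?w - G ?w" by (simp add: phi_def)
    have "G ?w = inner xt z - t * (norm xt)^2 - phi xt"
      using phix pz by (simp add: inner_diff_right power2_norm_eq_inner)
    moreover have "t * (norm xt)^2 \<ge> 0" using tpos by simp
    ultimately have "G ?w \<le> M" using M[of xt] by linarith
    then have inS: "?w \<in> {w. g w \<le> ereal M}" using g_p[of xt] by simp
    have dist: "dist ?w z = t * norm xt" using pz tpos by (simp add: dist_norm)
    have "\<psi> xt \<le> \<psi> 0" by (rule glob)
    then have "t / 2 * (norm xt)^2 \<le> phi 0 + M"
      using M[of xt] psi0 unfolding \<psi>_def by (simp add: power2_norm_eq_inner)
    then have "t / 2 * (norm xt)^2 < C" unfolding C_def by linarith
    then have "t * (t / 2 * (norm xt)^2) < t * C" using tpos by simp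
    then have "(t * norm xt)^2 < e^2"
      using Cpos unfolding t_def by (simp add: power2_eq_square field_simps)
    then have "t * norm xt < e" using e power_less_imp_less_base[of "t * norm xt" 2 e] by simp
    then show "\<exists>w\<in>{w. g w \<le> ereal M}. dist w z < e" using inS dist by auto
  qed
  then show ?thesis using closed_approachable[OF cl] by simp
qed

lemma g_convex: "convex_efun g"
  unfolding convex_efun_def
proof (intro allI impI)
  fix a b :: 'a and s :: real assume s: "0 < s \<and> s < 1"
  show "g (s *\<^sub>R a + (1 - s) *\<^sub>R b) \<le> ereal s * g a + ereal (1 - s) * g b"
  proof (cases "g a = \<infinity> \<or> g b = \<infinity>")
    case True
    then have eq: "ereal s * g a + ereal (1 - s) * g b = \<infinity>"
      using s ninf[of a] ninf[of b] by (cases "g a"; cases "g b") auto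
    show ?thesis unfolding eq by simp
  next
    case False
    then obtain A B where AB: "g a = ereal A" "g b = ereal B"
      using ninf[of a] ninf[of b] by (cases "g a"; cases "g b") auto
    have "g (s *\<^sub>R a + (1 - s) *\<^sub>R b) \<le> ereal (s * A + (1 - s) * B)"
    proof (rule core)
      fix x
      have ia: "inner x a - A \<le> phi x" by (rule phi_ge'[OF AB(1)])
      have ib: "inner x b - B \<le> phi x" by (rule phi_ge'[OF AB(2)])
      have "s * (inner x a - phi x) \<le> s * A" using ia s by (intro mult_left_mono) auto
      moreover have "(1 - s) * (inner x b - phi x) \<le> (1 - s) * B" using ib s by (intro mult_left_mono) auto
      moreover have "inner x (s *\<^sub>R a + (1 - s) *\<^sub>R b) - phi x
          = s * (inner x a - phi x) + (1 - s) * (inner x b - phi x)"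
        by (simp add: inner_add_right algebra_simps)
      ultimately show "inner x (s *\<^sub>R a + (1 - s) *\<^sub>R b) - phi x \<le> s * A + (1 - s) * B" by linarith
    qed
    then show ?thesis using AB by simp
  qed
qed

end



context gfun begin

lemma proper_g: "proper_fun g"
  unfolding proper_fun_def using ninf fin by blast

lemma subdiff_am: "v \<in> subdiff g y \<longleftrightarrow> y \<in> am v"
proof
  assume v: "v \<in> subdiff g y"
  then obtain c where c: "g y = ereal c" unfolding subdiff_def by (cases "g y") auto
  have "H v y \<le> H v y'" for y'
  proof -
    have "g y + ereal (inner v (y' - y)) \<le> g y'" using v unfolding subdiff_def by auto
    then show ?thesis using c ninf[of y'] by (cases "g y'") (auto simp: H_def inner_diff_right)
  qed
  then show "y \<in> am v" unfolding am_def by blast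
next
  assume y: "y \<in> am v"
  obtain c where c: "g y = ereal c" using am_fin[OF y] ninf[of y] by (cases "g y") auto
  have "g y + ereal (inner v (y' - y)) \<le> g y'" for y'
  proof -
    have "H v y \<le> H v y'" using y unfolding am_def by auto
    then show ?thesis using c ninf[of y'] by (cases "g y'") (auto simp: H_def inner_diff_right)
  qed
  then show "v \<in> subdiff g y" unfolding subdiff_def using c by auto
qed

lemma sv_from_strict:
  assumes "ess_strictly_convex g"
  shows "\<exists>u. am x = {u}"
proof -
  have cvx: "convex_efun g" and sc: "\<And>C. convex C \<Longrightarrow> C \<subseteq> {x. subdiff g x \<noteq> {}} \<Longrightarrow> strictly_convex_on_efun C g"
    using assms unfolding ess_strictly_convex_def by auto
  obtain u where u: "u \<in> am x" using am_exists by blast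
  have "y = u" if y: "y \<in> am x" for y
  proof (rule ccontr)
    assume yu: "y \<noteq> u"
    obtain U where U: "g u = ereal U" using am_fin[OF u] ninf[of u] by (cases "g u") auto
    obtain Y where Y: "g y = ereal Y" using am_fin[OF y] ninf[of y] by (cases "g y") auto
    have "H x u \<le> H x y" "H x y \<le> H x u" using u y unfolding am_def by auto
    then have eqm: "U - inner x u = Y - inner x y" using U Y by (simp add: H_def)
    have seg: "w \<in> am x" if w: "w \<in> closed_segment u y" for w
    proof -
      obtain s where s: "0 \<le> s" "s \<le> 1" "w = (1 - s) *\<^sub>R u + s *\<^sub>R y"
        using w unfolding closed_segment_image_interval by auto
      have "H x w \<le> H x u"
      proof (cases "s = 0 \<or> s = 1")
        case True then show ?thesis using s \<open>H x y \<le> H x u\<close> by auto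
      next
        case False
        then have s': "0 < 1 - s" "1 - s < 1" using s by auto
        have "g ((1 - s) *\<^sub>R u + (1 - (1 - s)) *\<^sub>R y) \<le> ereal (1 - s) * g u + ereal (1 - (1 - s)) * g y"
          using cvx s' unfolding convex_efun_def by blast
        moreover have "1 - (1 - s) = s" by simp
        ultimately have "g w \<le> ereal (1 - s) * g u + ereal s * g y" unfolding s(3) by simp
        then have "g w \<le> ereal ((1 - s) * U + s * Y)" using U Y by simp
        moreover have "inner x w = (1 - s) * inner x u + s * inner x y"
          using s(3) by (simp add: inner_add_right)
        ultimately have "H x w \<le> ereal ((1 - s) * (U - inner x u) + s * (Y - inner x y))"
          using ninf[of w] by (cases "g w") (auto simp: H_def algebra_simps)
        moreover have "(1 - s) * (U - inner x u) + s * (Y - inner x y) = U - inner x u"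
        proof -
          have "(1 - s) * c + s * c = c" for c :: real by (simp add: left_diff_distrib)
          then show ?thesis using eqm by metis
        qed
        ultimately show ?thesis using U by (simp add: H_def)
      qed
      then show ?thesis using u unfolding am_def by (blast intro: order_trans)
    qed
    have "closed_segment u y \<subseteq> {x. subdiff g x \<noteq> {}}"
      using seg subdiff_am by blast
    then have "strictly_convex_on_efun (closed_segment u y) g"
      using sc convex_closed_segment by blast
    then have "g ((1/2) *\<^sub>R u + (1 - 1/2) *\<^sub>R y) < ereal (1/2) * g u + ereal (1 - 1/2) * g y"
    proof -
      have h: "(0::real) < 1/2" "(1/2::real) < 1" by auto
      have e1: "u \<in> closed_segment u y" and e2: "y \<in> closed_segment u y" by (rule ends_in_segment)+
      have uy: "u \<noteq> y" using yu by simp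
      have all: "\<forall>a\<in>closed_segment u y. \<forall>b\<in>closed_segment u y. \<forall>s. a \<noteq> b \<and> 0 < s \<and> s < 1 \<longrightarrow>
          g (s *\<^sub>R a + (1 - s) *\<^sub>R b) < ereal s * g a + ereal (1 - s) * g b"
        using \<open>strictly_convex_on_efun (closed_segment u y) g\<close> unfolding strictly_convex_on_efun_def .
      show ?thesis by (rule all[rule_format, OF e1 e2]) (use uy h in simp)
    qed
    then have lt: "g ((1/2) *\<^sub>R u + (1/2) *\<^sub>R y) < ereal (U / 2 + Y / 2)" using U Y by simp
    define w where "w = (1/2) *\<^sub>R u + (1/2) *\<^sub>R y"
    have "inner x w = inner x u / 2 + inner x y / 2" unfolding w_def by (simp add: inner_add_right)
    moreover have lt': "g w < ereal (U / 2 + Y / 2)" using lt unfolding w_def .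
    then obtain W where W: "g w = ereal W" using ninf[of w] by (cases "g w") auto
    then have "W < U / 2 + Y / 2" using lt' by simp
    moreover have "H x u \<le> H x w" using u unfolding am_def by auto
    then have "U - inner x u \<le> W - inner x w" using U W by (simp add: H_def)
    ultimately show False using eqm by linarith
  qed
  then show ?thesis using u by blast
qed

lemma sv_from_strong:
  assumes "\<exists>u\<in>am x. ess_strongly_convex_at g u x"
  shows "\<exists>u. am x = {u}"
proof -
  obtain u where u: "u \<in> am x" and sc: "ess_strongly_convex_at g u x" using assms by blast
  obtain psi where psi: "psi \<in> Gamma0" and ineq: "\<And>y. g y \<ge> g u + ereal (inner (y - u) x) + psi (norm (y - u))"
    using sc unfolding ess_strongly_convex_at_def by blast
  obtain U where U: "g u = ereal U" using am_fin[OF u] ninf[of u] by (cases "g u") auto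
  have "y = u" if y: "y \<in> am x" for y
  proof (rule ccontr)
    assume yu: "y \<noteq> u"
    then have np: "norm (y - u) > 0" by simp
    have "psi (norm (y - u)) \<ge> 0" "psi (norm (y - u)) \<noteq> 0" using psi np unfolding Gamma0_def by auto
    then have pos: "psi (norm (y - u)) > 0" by (simp add: order_le_neq_trans)
    obtain Y where Y: "g y = ereal Y" using am_fin[OF y] ninf[of y] by (cases "g y") auto
    have le: "H x y \<le> H x u" using y unfolding am_def by auto
    have "ereal U + ereal (inner (y - u) x) + psi (norm (y - u)) \<le> ereal Y" using ineq[of y] U Y by simp
    then obtain q where q: "psi (norm (y - u)) = ereal q" "q > 0" using pos
      by (cases "psi (norm (y - u))") auto
    have "U + inner (y - u) x + q \<le> Y" using ineq[of y] U Y q by simp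
    moreover have "Y - inner x y \<le> U - inner x u" using le U Y by (simp add: H_def)
    moreover have "inner (y - u) x = inner x y - inner x u"
      by (simp add: inner_commute[of "y - u" x] inner_diff_right)
    ultimately show False using q(2) by linarith
  qed
  then show ?thesis using u by blast
qed

end

context sv begin

lemma strict: "ess_strictly_convex g"
  unfolding ess_strictly_convex_def
proof (intro conjI proper_g g_convex allI impI)
  fix C assume C: "convex C \<and> C \<subseteq> {x. subdiff g x \<noteq> {}}"
  show "strictly_convex_on_efun C g"
    unfolding strictly_convex_on_efun_def
  proof (intro ballI allI impI)
    fix a b :: 'a and s :: real assume ab: "a \<in> C" "b \<in> C" and s: "a \<noteq> b \<and> 0 < s \<and> s < 1"
    define z where "z = s *\<^sub>R a + (1 - s) *\<^sub>R b"
    have "z \<in> C" using C ab s unfolding z_def by (simp add: convexD)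
    then obtain v where "v \<in> subdiff g z" using C by auto
    then have zv: "z \<in> am v" using subdiff_am by blast
    obtain va where "va \<in> subdiff g a" using C ab by auto
    then have "a \<in> am va" using subdiff_am by blast
    then obtain A where A: "g a = ereal A" using am_fin ninf[of a] by (cases "g a") auto
    obtain vb where "vb \<in> subdiff g b" using C ab by auto
    then have "b \<in> am vb" using subdiff_am by blast
    then obtain B where B: "g b = ereal B" using am_fin ninf[of b] by (cases "g b") auto
    obtain Z where Z: "g z = ereal Z" using am_fin[OF zv] ninf[of z] by (cases "g z") auto
    show "g (s *\<^sub>R a + (1 - s) *\<^sub>R b) < ereal s * g a + ereal (1 - s) * g b"
    proof (rule ccontr)
      assume "\<not> ?thesis"
      then have ge: "s * A + (1 - s) * B \<le> Z" using A B Z unfolding z_def by simp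
      have "H v z \<le> H v a" "H v z \<le> H v b" using zv unfolding am_def by auto
      then have ha: "Z - inner v z \<le> A - inner v a" and hb: "Z - inner v z \<le> B - inner v b"
        using A B Z by (simp_all add: H_def)
      have iz: "inner v z = s * inner v a + (1 - s) * inner v b"
        unfolding z_def by (simp add: inner_add_right)
      define \<alpha> where "\<alpha> = (A - inner v a) - (Z - inner v z)"
      define \<beta> where "\<beta> = (B - inner v b) - (Z - inner v z)"
      have "s * \<alpha> + (1 - s) * \<beta> = s * A + (1 - s) * B - Z - (s * inner v a + (1 - s) * inner v b - inner v z)"
        unfolding \<alpha>_def \<beta>_def by (simp add: algebra_simps)
      then have "s * \<alpha> + (1 - s) * \<beta> \<le> 0" using ge iz by linarith
      moreover have "\<alpha> \<ge> 0" "\<beta> \<ge> 0" using ha hb unfolding \<alpha>_def \<beta>_def by auto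
      moreover have "s * \<alpha> \<ge> 0" "(1 - s) * \<beta> \<ge> 0" using s \<open>\<alpha> \<ge> 0\<close> \<open>\<beta> \<ge> 0\<close> by auto
      ultimately have "s * \<alpha> = 0" "(1 - s) * \<beta> = 0" by linarith+
      then have "\<alpha> = 0" "\<beta> = 0" using s by auto
      then have "H v a \<le> H v z" "H v b \<le> H v z" using A B Z unfolding \<alpha>_def \<beta>_def H_def by auto
      then have "a \<in> am v" "b \<in> am v" using zv unfolding am_def by (blast intro: order_trans)+
      then show False using am_eq[of v] s by auto
    qed
  qed
qed

end



lemma max_affine_convex:
  fixes a b s t D :: real
  assumes s: "0 < s" "s < 1" and D: "D \<ge> 0"
  shows "max 0 ((s * a + (1 - s) * b - t) * D) \<le> s * max 0 ((a - t) * D) + (1 - s) * max 0 ((b - t) * D)"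
proof -
  have eq: "(s * a + (1 - s) * b - t) * D = s * ((a - t) * D) + (1 - s) * ((b - t) * D)"
    by (simp add: algebra_simps)
  have "s * ((a - t) * D) \<le> s * max 0 ((a - t) * D)" using s by (intro mult_left_mono) auto
  moreover have "(1 - s) * ((b - t) * D) \<le> (1 - s) * max 0 ((b - t) * D)" using s by (intro mult_left_mono) auto
  moreover have "0 \<le> s * max 0 ((a - t) * D)" "0 \<le> (1 - s) * max 0 ((b - t) * D)" using s by auto
  ultimately show ?thesis unfolding eq by linarith
qed

context sv begin

lemma strong: "\<exists>u\<in>am x. ess_strongly_convex_at g u x"
proof -
  define u where "u = p x"
  have uam: "u \<in> am x" unfolding u_def by (rule p_am)
  obtain U where U: "g u = ereal U" unfolding u_def using g_p by blast
  define m where "m = U - inner x u"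
  have Hm: "H x u = ereal m" using U unfolding m_def H_def by simp
  have Hmin: "ereal m \<le> H x y" for y using uam Hm unfolding am_def by auto
  have sph: "\<exists>c>0. \<forall>w. norm (w - u) = t \<longrightarrow> ereal (m + c) \<le> H x w" if t: "t > 0" for t
  proof -
    have sne: "sphere u t \<noteq> {}" using t by (simp add: sphere_eq_empty)
    obtain w0 where w0: "w0 \<in> sphere u t" "\<And>w. w \<in> sphere u t \<Longrightarrow> H x w0 \<le> H x w"
      using lsc_attain[OF H_lsc compact_sphere sne] by blast
    have "w0 \<noteq> u" using w0(1) t by auto
    then have "w0 \<notin> am x" using am_eq[of x] unfolding u_def by auto
    have "ereal m < H x w0"
    proof (rule ccontr)
      assume "\<not> ereal m < H x w0"
      then have "H x w0 \<le> ereal m" by simp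
      then have "w0 \<in> am x" using Hmin unfolding am_def by (blast intro: order_trans)
      then show False using \<open>w0 \<notin> am x\<close> by simp
    qed
    then obtain c' where c': "m < c'" "ereal c' < H x w0" using ereal_dense2 by (metis ereal_less(2) less_ereal.simps(1) ereal_dense2)
    have "ereal (m + (c' - m)) \<le> H x w" if "norm (w - u) = t" for w
    proof -
      have "w \<in> sphere u t" using that by (simp add: dist_norm norm_minus_commute)
      then have "H x w0 \<le> H x w" by (rule w0(2))
      then show ?thesis using c'(2) by simp
    qed
    then show ?thesis using c'(1) by (intro exI[of _ "c' - m"]) auto
  qed
  define c where "c t = (SOME c. c > 0 \<and> (\<forall>w. norm (w - u) = t \<longrightarrow> ereal (m + c) \<le> H x w))" for t
  have c: "c t > 0 \<and> (\<forall>w. norm (w - u) = t \<longrightarrow> ereal (m + c t) \<le> H x w)" if "t > 0" for t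
    unfolding c_def using someI_ex[OF sph[OF that]] by simp
  define d where "d t = min (c t / t) 1" for t
  have dpos: "d t > 0" if "t > 0" for t using c[OF that] that unfolding d_def by simp
  have dle: "d t \<le> c t / t" for t unfolding d_def by simp
  have key: "m + norm (y - u) * (c t / t) \<le> Y - inner x y"
    if t: "0 < t" "t \<le> norm (y - u)" and Y: "g y = ereal Y" for t y Y
  proof -
    define r where "r = norm (y - u)"
    have rpos: "r > 0" using t unfolding r_def by linarith
    show ?thesis
    proof (cases "t = r")
      case True
      then have "ereal (m + c t) \<le> H x y" using c[OF t(1)] unfolding r_def by auto
      then show ?thesis using True t Y unfolding r_def by (simp add: H_def)
    next
      case False
      then have tr: "t < r" using t unfolding r_def by simp
      define s where "s = t / r"
      have s: "0 < s" "s < 1" using tr t rpos unfolding s_def by auto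
      define w where "w = s *\<^sub>R y + (1 - s) *\<^sub>R u"
      have "w - u = s *\<^sub>R (y - u)" unfolding w_def by (simp add: algebra_simps)
      then have "norm (w - u) = s * r" using s unfolding r_def by simp
      also have "\<dots> = t" unfolding s_def using rpos by simp
      finally have "ereal (m + c t) \<le> H x w" using c[OF t(1)] by blast
      moreover have "g w \<le> ereal s * g y + ereal (1 - s) * g u"
        using g_convex s unfolding convex_efun_def w_def by blast
      then have "g w \<le> ereal (s * Y + (1 - s) * U)" using Y U by simp
      moreover have "inner x w = s * inner x y + (1 - s) * inner x u"
        unfolding w_def by (simp add: inner_add_right)
      ultimately have "m + c t \<le> s * Y + (1 - s) * U - (s * inner x y + (1 - s) * inner x u)"
        using ninf[of w] by (cases "g w") (auto simp: H_def)
      also have "\<dots> = s * (Y - inner x y) + (1 - s) * m" unfolding m_def by (simp add: algebra_simps)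
      finally have "c t \<le> s * (Y - inner x y - m)" by (simp add: algebra_simps)
      then have "c t * r \<le> t * (Y - inner x y - m)" using rpos unfolding s_def by (simp add: field_simps)
      then have "r * (c t / t) \<le> Y - inner x y - m" using t(1) by (simp add: field_simps)
      then show ?thesis unfolding r_def by simp
    qed
  qed
  define psi where "psi r = (SUP t\<in>{0<..}. ereal (max 0 ((r - t) * d t)))" for r
  have psi_ge: "ereal (max 0 ((r - t) * d t)) \<le> psi r" if "t > 0" for r t
    unfolding psi_def using that by (intro SUP_upper) auto
  have psi_nn: "0 \<le> psi r" for r
  proof -
    have "(0::ereal) \<le> ereal (max 0 ((r - 1) * d 1))" unfolding zero_ereal_def ereal_less_eq(3) by simp
    then show ?thesis using psi_ge[of 1 r] by (meson order_trans zero_less_one)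
  qed
  have psi_bound: "psi (norm (y - u)) \<le> ereal (Y - inner x y - m)" if Y: "g y = ereal Y" for y Y
    unfolding psi_def
  proof (rule SUP_least)
    fix t :: real assume "t \<in> {0<..}"
    then have t: "t > 0" by simp
    have D: "0 \<le> Y - inner x y - m" using Hmin[of y] Y by (simp add: H_def)
    have "max 0 ((norm (y - u) - t) * d t) \<le> Y - inner x y - m"
    proof (cases "t \<le> norm (y - u)")
      case True
      have "(norm (y - u) - t) * d t \<le> norm (y - u) * d t"
        using dpos[OF t] t by (intro mult_right_mono) auto
      also have "\<dots> \<le> norm (y - u) * (c t / t)" by (intro mult_left_mono dle) auto
      also have "\<dots> \<le> Y - inner x y - m" using key[OF t True Y] by simp
      finally show ?thesis using D by simp
    next
      case False
      then have "(norm (y - u) - t) * d t \<le> 0" using dpos[OF t]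
        by (intro mult_nonpos_nonneg) auto
      then show ?thesis using D by simp
    qed
    then show "ereal (max 0 ((norm (y - u) - t) * d t)) \<le> ereal (Y - inner x y - m)" by simp
  qed
  have G0: "psi \<in> Gamma0"
    unfolding Gamma0_def
  proof (intro CollectI conjI allI impI)
    fix t :: real assume "t \<ge> 0" show "0 \<le> psi t" by (rule psi_nn)
  next
    show "psi 0 = 0"
    proof (rule antisym)
      show "psi 0 \<le> 0" unfolding psi_def
      proof (rule SUP_least)
        fix t :: real assume "t \<in> {0<..}"
        then have "(0 - t) * d t \<le> 0" using dpos[of t] by (intro mult_nonpos_nonneg) auto
        then show "ereal (max 0 ((0 - t) * d t)) \<le> 0" by simp
      qed
      show "0 \<le> psi 0" by (rule psi_nn)
    qed
  next
    fix t :: real assume t: "t > 0"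
    have "0 < (t - t / 2) * d (t / 2)" using dpos[of "t/2"] t by simp
    then have "0 < ereal (max 0 ((t - t / 2) * d (t / 2)))" by simp
    also have "\<dots> \<le> psi t" using t by (intro psi_ge) simp
    finally show "psi t \<noteq> 0" by simp
  next
    fix t :: real assume t: "t \<ge> 0"
    let ?F = "at t within {0::real..}"
    have Fnb: "?F \<noteq> bot"
      unfolding not_trivial_limit_within_ball
    proof (intro allI impI)
      fix e :: real assume e: "e > 0"
      have "t + e / 2 \<in> {0..} \<inter> ball t e - {t}" using t e by (auto simp: dist_real_def)
      then show "{0..} \<inter> ball t e - {t} \<noteq> {}" by blast
    qed
    show "psi t \<le> Liminf ?F psi"
      unfolding psi_def[of t]
    proof (rule SUP_least)
      fix \<tau> :: real assume "\<tau> \<in> {0<..}"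
      then have \<tau>: "\<tau> > 0" by simp
      have lim: "((\<lambda>r. ereal (max 0 ((r - \<tau>) * d \<tau>))) \<longlongrightarrow> ereal (max 0 ((t - \<tau>) * d \<tau>))) ?F"
        by (intro tendsto_ereal tendsto_intros)
      have "ereal (max 0 ((t - \<tau>) * d \<tau>)) = Liminf ?F (\<lambda>r. ereal (max 0 ((r - \<tau>) * d \<tau>)))"
        using lim_imp_Liminf[OF Fnb lim] by simp
      also have "\<dots> \<le> Liminf ?F psi"
        by (intro Liminf_mono always_eventually allI psi_ge \<tau>)
      finally show "ereal (max 0 ((t - \<tau>) * d \<tau>)) \<le> Liminf ?F psi" .
    qed
  next
    fix a b :: real and s :: real
    assume "0 \<le> a" and "0 \<le> b" and s: "0 < s \<and> s < 1"
    show "psi (s * a + (1 - s) * b) \<le> ereal s * psi a + ereal (1 - s) * psi b"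
      unfolding psi_def[of "s * a + (1 - s) * b"]
    proof (rule SUP_least)
      fix \<tau> :: real assume "\<tau> \<in> {0<..}"
      then have \<tau>: "\<tau> > 0" by simp
      define X where "X = max 0 ((s * a + (1 - s) * b - \<tau>) * d \<tau>)"
      define A' where "A' = max 0 ((a - \<tau>) * d \<tau>)"
      define B' where "B' = max 0 ((b - \<tau>) * d \<tau>)"
      have "X \<le> s * A' + (1 - s) * B'"
        unfolding X_def A'_def B'_def using s dpos[OF \<tau>] by (intro max_affine_convex) auto
      then have "ereal X \<le> ereal s * ereal A' + ereal (1 - s) * ereal B'"
        by (simp only: times_ereal.simps(1) plus_ereal.simps(1) ereal_less_eq(3))
      then have "ereal (max 0 ((s * a + (1 - s) * b - \<tau>) * d \<tau>))
          \<le> ereal s * ereal (max 0 ((a - \<tau>) * d \<tau>)) + ereal (1 - s) * ereal (max 0 ((b - \<tau>) * d \<tau>))"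
        unfolding X_def A'_def B'_def .
      also have "\<dots> \<le> ereal s * psi a + ereal (1 - s) * psi b"
        using s by (intro add_mono ereal_mult_left_mono psi_ge \<tau>) auto
      finally show "ereal (max 0 ((s * a + (1 - s) * b - \<tau>) * d \<tau>)) \<le> ereal s * psi a + ereal (1 - s) * psi b" .
    qed
  qed
  have "g u + ereal (inner (y - u) x) + psi (norm (y - u)) \<le> g y" for y
  proof (cases "g y")
    case PInf then show ?thesis by simp
  next
    case MInf then show ?thesis using ninf by simp
  next
    case (real Y)
    have b: "psi (norm (y - u)) \<le> ereal (Y - inner x y - m)" by (rule psi_bound[OF real])
    obtain q where q: "psi (norm (y - u)) = ereal q"
      using b psi_nn[of "norm (y - u)"] by (cases "psi (norm (y - u))") auto
    have "q \<le> Y - inner x y - m" using b q by simp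
    moreover have "inner (y - u) x = inner x y - inner x u"
      by (simp add: inner_commute[of "y - u" x] inner_diff_right)
    ultimately have "U + inner (y - u) x + q \<le> Y" unfolding m_def by linarith
    then show ?thesis using U q real by simp
  qed
  then have "ess_strongly_convex_at g u x"
    unfolding ess_strongly_convex_at_def using U G0 by auto
  then show ?thesis using uam by blast
qed

end




lemma lsc_open:
  assumes "lsc_fun f"
  shows "open {y. ereal t < f y}"
proof (rule open_subopen[THEN iffD2], rule ballI)
  fix y assume "y \<in> {y. ereal t < f y}"
  then have ty: "ereal t < f y" by simp
  have "f y \<le> Liminf (at y) f" using assms unfolding lsc_fun_def by blast
  then have "ereal t < Liminf (at y) f" using ty by (rule less_le_trans[rotated])
  then have "eventually (\<lambda>z. ereal t < f z) (at y)" by (rule less_LiminfD)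
  then obtain S where S: "open S" "y \<in> S" "\<forall>z\<in>S. z \<noteq> y \<longrightarrow> z \<in> UNIV \<longrightarrow> ereal t < f z"
    unfolding eventually_at_topological by blast
  have "S \<subseteq> {y. ereal t < f y}" using S ty by auto
  then show "\<exists>T. open T \<and> y \<in> T \<and> T \<subseteq> {y. ereal t < f y}" using S by blast
qed

lemma ereal_mult_le_iff_pos:
  fixes a b :: ereal
  assumes "c > 0"
  shows "ereal c * a \<le> ereal c * b \<longleftrightarrow> a \<le> b"
  using assms by (cases a; cases b) (auto simp: mult_le_cancel_left_pos)

lemma quad_nonneg:
  fixes \<alpha> \<beta> n :: real
  assumes "\<alpha> > 0"
  shows "\<alpha> * n^2 - \<beta> * n + \<beta>^2 / (4 * \<alpha>) \<ge> 0"
proof -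
  have "\<alpha> * n^2 - \<beta> * n + \<beta>^2 / (4 * \<alpha>) = (2 * \<alpha> * n - \<beta>)^2 / (4 * \<alpha>)"
    using assms by (simp add: field_simps power2_eq_square)
  also have "\<dots> \<ge> 0" using assms by simp
  finally show ?thesis .
qed

lemma norm_diff_sq: "(norm (y - x))^2 = (norm y)^2 - 2 * inner x y + (norm (x::'a::real_inner))^2"
proof -
  have "(norm (y - x))^2 = inner (y - x) (y - x)" by (rule power2_norm_eq_inner)
  also have "\<dots> = inner y y - inner y x - inner x y + inner x x"
    by (simp only: inner_diff_left inner_diff_right diff_diff_eq2 diff_add_eq)
  also have "inner y x = inner x y" by (rule inner_commute)
  also have "inner y y = (norm y)^2" by (rule power2_norm_eq_inner[symmetric])
  also have "inner x x = (norm x)^2" by (rule power2_norm_eq_inner[symmetric])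
  finally show ?thesis by simp
qed



lemma (in gfun) main_equiv:
  shows "((\<forall>x. \<exists>u. am x = {u}) \<longleftrightarrow> (\<forall>x. \<exists>u\<in>am x. ess_strongly_convex_at g u x))
       \<and> ((\<forall>x. \<exists>u. am x = {u}) \<longleftrightarrow> ess_strictly_convex g)
       \<and> ((\<forall>x. \<exists>u. am x = {u}) \<longrightarrow>
            (\<forall>x. \<bar>fconj g x\<bar> \<noteq> \<infinity> \<and>
                 ((\<lambda>y. real_of_ereal (fconj g y)) has_derivative
                    (\<lambda>h. inner (THE u. u \<in> am x) h)) (at x)))"
proof -
  have SV: "sv g" if "\<forall>x. \<exists>u. am x = {u}"
    using that by (simp add: sv_def sv_axioms_def gfun_axioms)
  have c1: "\<forall>x. \<exists>u\<in>am x. ess_strongly_convex_at g u x" if "\<forall>x. \<exists>u. am x = {u}"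
    using sv.strong[OF SV[OF that]] by blast
  have c2: "\<forall>x. \<exists>u. am x = {u}" if "\<forall>x. \<exists>u\<in>am x. ess_strongly_convex_at g u x"
    using sv_from_strong that by blast
  have c3: "ess_strictly_convex g" if "\<forall>x. \<exists>u. am x = {u}"
    using sv.strict[OF SV[OF that]] .
  have c4: "\<forall>x. \<exists>u. am x = {u}" if "ess_strictly_convex g"
    using sv_from_strict that by blast
  have c5: "\<bar>fconj g x\<bar> \<noteq> \<infinity> \<and>
                 ((\<lambda>y. real_of_ereal (fconj g y)) has_derivative
                    (\<lambda>h. inner (THE u. u \<in> am x) h)) (at x)" if "\<forall>x. \<exists>u. am x = {u}" for x
  proof -
    interpret S: sv g by (rule SV[OF that])
    have fe: "(\<lambda>y. real_of_ereal (fconj g y)) = S.phi" by (rule ext) (simp add: S.fconj_eq)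
    have "(THE u. u \<in> am x) = S.p x" by (simp add: S.p_def)
    then show ?thesis using S.phi_deriv[of x] S.fconj_eq[of x] unfolding fe by simp
  qed
  show ?thesis
  proof (intro conjI)
    show "(\<forall>x. \<exists>u. am x = {u}) \<longleftrightarrow> (\<forall>x. \<exists>u\<in>am x. ess_strongly_convex_at g u x)"
      using c1 c2 by blast
    show "(\<forall>x. \<exists>u. am x = {u}) \<longleftrightarrow> ess_strictly_convex g"
      using c3 c4 by blast
    show "(\<forall>x. \<exists>u. am x = {u}) \<longrightarrow>
            (\<forall>x. \<bar>fconj g x\<bar> \<noteq> \<infinity> \<and>
                 ((\<lambda>y. real_of_ereal (fconj g y)) has_derivative
                    (\<lambda>h. inner (THE u. u \<in> am x) h)) (at x))"
    proof (intro impI allI)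
      fix x assume "\<forall>x. \<exists>u. am x = {u}"
      then show "\<bar>fconj g x\<bar> \<noteq> \<infinity> \<and>
                 ((\<lambda>y. real_of_ereal (fconj g y)) has_derivative
                    (\<lambda>h. inner (THE u. u \<in> am x) h)) (at x)" by (rule c5)
    qed
  qed
qed

theorem mainTheorem10:
  fixes f :: "'a::euclidean_space \<Rightarrow> ereal" and lam :: real
  assumes "proper_fun f" and "lsc_fun f" and "prox_bounded f"
    and "prox_threshold f > 0"
    and "0 < lam" and "ereal lam < prox_threshold f"
  defines "g \<equiv> (\<lambda>y. ereal lam * f y + ereal (jfun y))"
  shows "((\<forall>x. \<exists>u. prox lam f x = {u})
           \<longleftrightarrow> (\<forall>x. \<exists>u\<in>prox lam f x. ess_strongly_convex_at g u x))
       \<and> ((\<forall>x. \<exists>u. prox lam f x = {u}) \<longleftrightarrow> ess_strictly_convex g)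
       \<and> ((\<forall>x. \<exists>u. prox lam f x = {u}) \<longrightarrow>
            (\<forall>x. \<bar>fconj g x\<bar> \<noteq> \<infinity> \<and>
                 ((\<lambda>y. real_of_ereal (fconj g y)) has_derivative
                    (\<lambda>h. inner (THE u. u \<in> prox lam f x) h)) (at x)))"
proof -
  have lam: "lam > 0" by (rule assms(5))
  have fninf: "f y \<noteq> -\<infinity>" for y using assms(1) unfolding proper_fun_def by blast
  obtain y0 where y0: "f y0 \<noteq> \<infinity>" using assms(1) unfolding proper_fun_def by blast
  have lamf_ninf: "ereal lam * f y \<noteq> -\<infinity>" for y using fninf[of y] lam by (cases "f y") auto
  have g_ninf: "g y \<noteq> -\<infinity>" for y using fninf[of y] lam unfolding g_def by (cases "f y") auto
  have "g y0 \<noteq> \<infinity>" using y0 fninf[of y0] lam unfolding g_def by (cases "f y0") auto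
  then have g_fin: "\<exists>y. g y \<noteq> \<infinity>" by blast
  have g_lsc: "open {y. ereal t < g y}" for t
  proof -
    have "open {y. ereal t < ereal lam * f y + ereal (jfun y)}"
    proof (rule lsc_add_cont)
      show "open {y. ereal s < ereal lam * f y}" for s
        by (rule lsc_scale[OF lsc_open[OF assms(2)] lam])
      show "continuous_on UNIV (jfun :: 'a \<Rightarrow> real)"
        unfolding jfun_def[abs_def] by (intro continuous_intros) auto
      show "ereal lam * f y \<noteq> - \<infinity>" for y by (rule lamf_ninf)
    qed
    then show ?thesis unfolding g_def by simp
  qed
  have g_coer: "\<exists>\<epsilon>>0. \<exists>K. \<forall>y. ereal (\<epsilon> * (norm y)^2 - K) \<le> g y"
  proof -
    have "ereal lam < Sup {ereal lam' | lam'. lam' > 0 \<and> (\<exists>x. moreau_env lam' f x > -\<infinity>)}"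
      using assms(6) unfolding prox_threshold_def .
    then obtain lam' x0 where l': "lam' > 0" "moreau_env lam' f x0 > -\<infinity>" "ereal lam < ereal lam'"
      unfolding less_Sup_iff by blast
    then have ll: "lam < lam'" by simp
    obtain cc where cc: "ereal cc < moreau_env lam' f x0" using l'(2) ereal_dense2 by blast
    have fb: "ereal cc \<le> f y + ereal ((norm (y - x0))^2 / (2 * lam'))" for y
    proof -
      have "moreau_env lam' f x0 \<le> f y + ereal ((norm (y - x0))^2 / (2 * lam'))"
        unfolding moreau_env_def by (rule INF_lower) simp
      then show ?thesis using cc by simp
    qed
    define \<rho> where "\<rho> = lam / lam'"
    have \<rho>: "0 < \<rho>" "\<rho> < 1" unfolding \<rho>_def using lam ll by auto
    define a where "a = norm x0"
    define \<epsilon> where "\<epsilon> = (1 - \<rho>) / 4"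
    define K where "K = (\<rho> * a)^2 / (1 - \<rho>) + \<rho> * a^2 / 2 + \<bar>lam * cc\<bar>"
    have "ereal (\<epsilon> * (norm y)^2 - K) \<le> g y" for y
    proof (cases "f y")
      case PInf then show ?thesis unfolding g_def using lam by simp
    next
      case MInf then show ?thesis using fninf by simp
    next
      case (real r)
      define n where "n = norm y"
      have n0: "n \<ge> 0" unfolding n_def by simp
      have a0: "a \<ge> 0" unfolding a_def by simp
      have "cc \<le> r + (norm (y - x0))^2 / (2 * lam')" using fb[of y] real by simp
      then have "lam * cc \<le> lam * (r + (norm (y - x0))^2 / (2 * lam'))" using lam by (simp add: mult_left_mono)
      also have "\<dots> = lam * r + \<rho> * (norm (y - x0))^2 / 2" unfolding \<rho>_def using l'(1) by (simp add: field_simps)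
      finally have h1: "lam * cc \<le> lam * r + \<rho> * (norm (y - x0))^2 / 2" .
      have "norm (y - x0) \<le> n + a" unfolding n_def a_def by (rule norm_triangle_ineq4)
      then have "(norm (y - x0))^2 \<le> (n + a)^2" by (intro power_mono) auto
      then have h2: "\<rho> * (norm (y - x0))^2 \<le> \<rho> * (n + a)^2" using \<rho> by (intro mult_left_mono) auto
      have h3: "\<rho> * (n + a)^2 = \<rho> * n^2 + 2 * (\<rho> * a * n) + \<rho> * a^2" by (simp add: power2_eq_square algebra_simps)
      have q: "(1 - \<rho>) / 4 * n^2 - (\<rho> * a) * n + (\<rho> * a)^2 / (4 * ((1 - \<rho>) / 4)) \<ge> 0"
        using \<rho> by (intro quad_nonneg) simp
      have "4 * ((1 - \<rho>) / 4) = 1 - \<rho>" by simp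
      then have h4: "(\<rho> * a)^2 / (4 * ((1 - \<rho>) / 4)) = (\<rho> * a)^2 / (1 - \<rho>)" by (simp only:)
      have h5: "(1 - \<rho>) / 4 * n^2 = n^2 / 4 - \<rho> * n^2 / 4" by (simp add: field_simps)
      have h6: "\<epsilon> * n^2 = n^2 / 4 - \<rho> * n^2 / 4" unfolding \<epsilon>_def by (simp add: field_simps)
      have "\<epsilon> * n^2 - K \<le> lam * r + n^2 / 2"
        using h1 h2 h3 q h4 h5 h6 unfolding K_def using abs_ge_minus_self[of "lam * cc"] by linarith
      moreover have "g y = ereal (lam * r + n^2 / 2)" unfolding g_def n_def jfun_def using real by simp
      ultimately show ?thesis unfolding n_def by simp
    qed
    moreover have "\<epsilon> > 0" unfolding \<epsilon>_def using \<rho> by simp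
    ultimately show ?thesis by blast
  qed
  interpret G: gfun g by unfold_locales (fact g_ninf g_fin g_lsc g_coer)+
  have proxeq: "prox lam f x = G.am x" for x
  proof -
    have iden: "ereal lam * (f y + ereal ((norm (y - x))^2 / (2 * lam))) = G.H x y + ereal (jfun x)" for y
    proof (cases "f y")
      case PInf then show ?thesis using lam unfolding G.H_def unfolding g_def by simp
    next
      case MInf then show ?thesis using fninf by simp
    next
      case (real r)
      have "lam * (r + (norm (y - x))^2 / (2 * lam)) = lam * r + jfun y - inner x y + jfun x"
        using lam unfolding jfun_def norm_diff_sq by (simp add: field_simps)
      then show ?thesis using real unfolding G.H_def unfolding g_def by simp
    qed
    have "u \<in> prox lam f x \<longleftrightarrow> u \<in> G.am x" for u
    proof -
      have "u \<in> prox lam f x \<longleftrightarrow> (\<forall>y. ereal lam * (f u + ereal ((norm (u - x))^2 / (2 * lam)))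
           \<le> ereal lam * (f y + ereal ((norm (y - x))^2 / (2 * lam))))"
        unfolding prox_def using ereal_mult_le_iff_pos[OF lam] by simp
      also have "\<dots> \<longleftrightarrow> (\<forall>y. G.H x u + ereal (jfun x) \<le> G.H x y + ereal (jfun x))"
        unfolding iden ..
      also have "\<dots> \<longleftrightarrow> (\<forall>y. G.H x u \<le> G.H x y)" by (simp add: ereal_add_le_add_iff2)
      finally show ?thesis unfolding G.am_def by simp
    qed
    then show ?thesis by blast
  qed
  show ?thesis unfolding proxeq by (rule G.main_equiv)
qed


end
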